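(* Let $G$ be a finite, connected, simple $3$-regular graph on more than $6$ vertices that is $4$-ordered. Then every vertex of $G$ has exactly $6$ vertices at distance $2$ from it.
   Context: A simple graph $G$ is called $k$-ordered if for every sequence $v_1,\ldots,v_k$ of $k$ distinct vertices of $G$ there exists a cycle in $G$ containing these $k$ vertices in the specified (cyclic) order. Distance is the usual graph distance (length of a shortest path). *)

theory Defs
  imports Main "HOL-Library.Sublist"
begin

definition simple_graph :: "'a set \<Rightarrow> ('a \<Rightarrow> 'a \<Rightarrow> bool) \<Rightarrow> bool" where
  "simple_graph V E \<longleftrightarrow> finite V \<and> (\<forall>x y. E x y \<longrightarrow> x \<in> V \<and> y \<in> V)
     \<and> (\<forall>x y. E x y \<longrightarrow> E y x) \<and> (\<forall>x. \<not> E x x)"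

definition degree :: "'a set \<Rightarrow> ('a \<Rightarrow> 'a \<Rightarrow> bool) \<Rightarrow> 'a \<Rightarrow> nat" where
  "degree V E v = card {u \<in> V. E v u}"

definition regular :: "'a set \<Rightarrow> ('a \<Rightarrow> 'a \<Rightarrow> bool) \<Rightarrow> nat \<Rightarrow> bool" where
  "regular V E r \<longleftrightarrow> (\<forall>v\<in>V. degree V E v = r)"

(* A walk given as its list of vertices; its length is the number of edges. *)
definition is_walk :: "('a \<Rightarrow> 'a \<Rightarrow> bool) \<Rightarrow> 'a list \<Rightarrow> bool" where
  "is_walk E p \<longleftrightarrow> p \<noteq> [] \<and> (\<forall>i. Suc i < length p \<longrightarrow> E (p ! i) (p ! Suc i))"

definition walk_between :: "'a set \<Rightarrow> ('a \<Rightarrow> 'a \<Rightarrow> bool) \<Rightarrow> 'a \<Rightarrow> 'a \<Rightarrow> 'a list \<Rightarrow> bool" where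
  "walk_between V E u v p \<longleftrightarrow> is_walk E p \<and> set p \<subseteq> V \<and> hd p = u \<and> last p = v"

definition connected :: "'a set \<Rightarrow> ('a \<Rightarrow> 'a \<Rightarrow> bool) \<Rightarrow> bool" where
  "connected V E \<longleftrightarrow> (\<forall>u\<in>V. \<forall>v\<in>V. \<exists>p. walk_between V E u v p)"

definition dist :: "'a set \<Rightarrow> ('a \<Rightarrow> 'a \<Rightarrow> bool) \<Rightarrow> 'a \<Rightarrow> 'a \<Rightarrow> nat" where
  "dist V E u v = (LEAST n. \<exists>p. walk_between V E u v p \<and> length p = Suc n)"

definition is_cycle :: "'a set \<Rightarrow> ('a \<Rightarrow> 'a \<Rightarrow> bool) \<Rightarrow> 'a list \<Rightarrow> bool" where
  "is_cycle V E c \<longleftrightarrow> length c \<ge> 3 \<and> distinct c \<and> set c \<subseteq> V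
     \<and> (\<forall>i < length c. E (c ! i) (c ! ((Suc i) mod length c)))"

definition cycle_contains_in_order :: "'a list \<Rightarrow> 'a list \<Rightarrow> bool" where
  "cycle_contains_in_order c vs \<longleftrightarrow> (\<exists>r. subseq vs (rotate r c))"

definition k_ordered :: "'a set \<Rightarrow> ('a \<Rightarrow> 'a \<Rightarrow> bool) \<Rightarrow> nat \<Rightarrow> bool" where
  "k_ordered V E k \<longleftrightarrow> (\<forall>vs. length vs = k \<and> distinct vs \<and> set vs \<subseteq> V \<longrightarrow>
      (\<exists>c. is_cycle V E c \<and> cycle_contains_in_order c vs))"

end

theory Submission
  imports Defs
begin


lemma subseq_idx:
  "subseq xs ys \<Longrightarrow> \<exists>f. (\<forall>i<length xs. f i < length ys \<and> xs!i = ys!(f i)) \<and> (\<forall>i j. i<j \<and> j<length xs \<longrightarrow> f i < f j)"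
proof (induction xs ys rule: list_emb.induct)
  case (list_emb_Nil ys)
  then show ?case by auto
next
  case (list_emb_Cons xs ys y)
  then obtain f where f: "\<forall>i<length xs. f i < length ys \<and> xs!i = ys!(f i)" "\<forall>i j. i<j \<and> j<length xs \<longrightarrow> f i < f j" by blast
  show ?case
    by (rule exI[of _ "\<lambda>i. Suc (f i)"]) (use f in auto)
next
  case (list_emb_Cons2 x y xs ys)
  then obtain f where f: "\<forall>i<length xs. f i < length ys \<and> xs!i = ys!(f i)" "\<forall>i j. i<j \<and> j<length xs \<longrightarrow> f i < f j" by blast
  define h where "h = (\<lambda>i. case i of 0 \<Rightarrow> 0 | Suc k \<Rightarrow> Suc (f k))"
  have "\<forall>i<length (x#xs). h i < length (y#ys) \<and> (x#xs)!i = (y#ys)!(h i)"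
    using f(1) list_emb_Cons2.hyps(1) by (auto simp: h_def split: nat.splits)
  moreover have "\<forall>i j. i<j \<and> j<length (x#xs) \<longrightarrow> h i < h j"
    using f(2) by (auto simp: h_def split: nat.splits)
  ultimately show ?case by blast
qed

lemma rotate_cycle: "is_cycle V E c \<Longrightarrow> is_cycle V E (rotate r c)"
proof -
  assume c: "is_cycle V E c"
  let ?m = "length c"
  have m: "?m \<ge> 3" using c by (simp add: is_cycle_def)
  have e: "\<forall>i<?m. E (c ! i) (c ! (Suc i mod ?m))" using c by (simp add: is_cycle_def)
  have "\<forall>i<?m. E (rotate r c ! i) (rotate r c ! (Suc i mod ?m))"
  proof (intro allI impI)
    fix i assume i: "i < ?m"
    have 1: "rotate r c ! i = c ! ((r + i) mod ?m)" using i by (simp add: nth_rotate)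
    have 2: "rotate r c ! (Suc i mod ?m) = c ! ((r + Suc i mod ?m) mod ?m)" using m by (intro nth_rotate) (rule mod_less_divisor, linarith)
    have 3: "(r + Suc i mod ?m) mod ?m = Suc ((r + i) mod ?m) mod ?m"
      by (metis add_Suc_right mod_Suc_eq mod_add_right_eq)
    show "E (rotate r c ! i) (rotate r c ! (Suc i mod ?m))"
      unfolding 1 2 3 using e m by (meson mod_less_divisor less_le_trans zero_less_numeral)
  qed
  then show ?thesis using c by (simp add: is_cycle_def)
qed

lemma get_cycle:
  assumes "k_ordered V E 4" "distinct [x1,x2,x3,x4]" "set [x1,x2,x3,x4] \<subseteq> V"
  shows "\<exists>d i1 i2 i3 i4. is_cycle V E d \<and> i1<i2 \<and> i2<i3 \<and> i3<i4 \<and> i4 < length d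
     \<and> d!i1 = x1 \<and> d!i2 = x2 \<and> d!i3 = x3 \<and> d!i4 = x4"
proof -
  have l: "length [x1,x2,x3,x4] = 4" by simp
  obtain c r where c: "is_cycle V E c" "subseq [x1,x2,x3,x4] (rotate r c)"
    using assms(1) l assms(2,3) unfolding k_ordered_def cycle_contains_in_order_def by blast
  obtain f where f: "\<forall>i<4. f i < length (rotate r c) \<and> [x1,x2,x3,x4]!i = (rotate r c)!(f i)"
     "\<forall>i j. i<j \<and> j<4 \<longrightarrow> f i < f j"
    using subseq_idx[OF c(2)] unfolding l by blast
  have d: "is_cycle V E (rotate r c)" using rotate_cycle[OF c(1)] .
  show ?thesis
    apply (rule exI[of _ "rotate r c"], rule exI[of _ "f 0"], rule exI[of _ "f 1"], rule exI[of _ "f 2"], rule exI[of _ "f 3"])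
    using f(1)[rule_format, of 0] f(1)[rule_format, of 1] f(1)[rule_format, of 2] f(1)[rule_format, of 3]
      f(2)[rule_format, of 0 1] f(2)[rule_format, of 1 2] f(2)[rule_format, of 2 3] d by simp
qed

lemma modeq: "0 < (m::nat) \<Longrightarrow> x \<le> y \<Longrightarrow> x mod m = y mod m \<Longrightarrow> y = x \<or> y \<ge> x + m"
proof -
  assume m: "0 < m" and xy: "x \<le> y" and e: "x mod m = y mod m"
  have "m dvd y - x" using e xy by (metis mod_eq_dvd_iff_nat)
  then obtain t where t: "y - x = m * t" by blast
  show ?thesis
  proof (cases t)
    case 0 then show ?thesis using t xy by simp
  next
    case (Suc s) then have "m * t \<ge> m" by simp
    then show ?thesis using t xy by linarith
  qed
qed

definition cyc :: "'a list \<Rightarrow> nat \<Rightarrow> 'a" where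
  "cyc d j = d ! (j mod length d)"

lemma cyc_E: "is_cycle V E d \<Longrightarrow> E (cyc d j) (cyc d (Suc j))"
  unfolding is_cycle_def cyc_def
  by (metis mod_Suc_eq mod_less_divisor less_le_trans zero_less_numeral)

lemma cyc_V: "is_cycle V E d \<Longrightarrow> cyc d j \<in> V"
  unfolding is_cycle_def cyc_def
  by (metis nth_mem subsetD mod_less_divisor less_le_trans zero_less_numeral)

lemma cyc_eq: "is_cycle V E d \<Longrightarrow> cyc d j = cyc d k \<longleftrightarrow> j mod length d = k mod length d"
  unfolding is_cycle_def cyc_def
  by (metis nth_eq_iff_index_eq mod_less_divisor less_le_trans zero_less_numeral)

lemma cyc_nth: "i < length d \<Longrightarrow> cyc d i = d ! i"
  unfolding cyc_def by simp

lemma cyc_period: "cyc d (i + length d) = cyc d i"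
  unfolding cyc_def by simp

lemma cyc_inj: "is_cycle V E d \<Longrightarrow> i \<le> j \<Longrightarrow> j < k \<Longrightarrow> k < i + length d \<Longrightarrow> cyc d j \<noteq> cyc d k"
proof
  assume c: "is_cycle V E d" and h: "i \<le> j" "j < k" "k < i + length d" and e: "cyc d j = cyc d k"
  have m: "length d \<ge> 3" using c by (simp add: is_cycle_def)
  have dn: "d \<noteq> []" using m by auto
  have "k = j \<or> k \<ge> j + length d" using modeq[of "length d" j k] e cyc_eq[OF c] m h dn by (simp add: less_imp_le)
  then show False using h by linarith
qed

lemma crossing: "a < b \<Longrightarrow> P a \<noteq> P b \<Longrightarrow> \<exists>j. a \<le> j \<and> j < b \<and> P j \<noteq> P (Suc j)"
proof (induction b)
  case 0 then show ?case by simp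
next
  case (Suc b)
  show ?case
  proof (cases "P a = P b")
    case True
    then show ?thesis using Suc.prems by (intro exI[of _ b]) auto
  next
    case False
    then have "a < b" using Suc.prems by (metis less_SucE)
    then show ?thesis using Suc.IH False by (meson less_SucI)
  qed
qed

lemma edge_inj:
  assumes c: "is_cycle V E d" and h: "i \<le> j" "j < k" "k < i + length d"
  shows "{cyc d j, cyc d (Suc j)} \<noteq> {cyc d k, cyc d (Suc k)}"
proof
  assume e: "{cyc d j, cyc d (Suc j)} = {cyc d k, cyc d (Suc k)}"
  have m: "length d \<ge> 3" using c by (simp add: is_cycle_def)
  have dn: "d \<noteq> []" using m by auto
  have ne: "cyc d j \<noteq> cyc d k" using cyc_inj[OF c h] .
  then have 1: "cyc d j = cyc d (Suc k)" and 2: "cyc d (Suc j) = cyc d k" using e by (auto simp: doubleton_eq_iff)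
  have a: "Suc k = j \<or> Suc k \<ge> j + length d" using modeq[of "length d" j "Suc k"] 1 cyc_eq[OF c] m h dn by simp
  have b: "k = Suc j \<or> k \<ge> Suc j + length d" using modeq[of "length d" "Suc j" k] 2 cyc_eq[OF c] m h dn by simp
  show False using a b h m by linarith
qed

lemma cut_lemma:
  assumes sg: "simple_graph V E" and ko: "k_ordered V E 4"
    and F: "finite F" "card F \<le> 3"
    and bd: "\<And>u w. u \<in> S \<Longrightarrow> w \<notin> S \<Longrightarrow> E u w \<Longrightarrow> {u,w} \<in> F"
    and xy: "x \<in> S" "y \<in> S" "x \<noteq> y" and pq: "p \<notin> S" "q \<notin> S" "p \<noteq> q"
    and V: "x \<in> V" "y \<in> V" "p \<in> V" "q \<in> V"
  shows False
proof -
  have "distinct [x,p,y,q]" using xy pq by auto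
  moreover have "set [x,p,y,q] \<subseteq> V" using V by auto
  ultimately obtain d i1 i2 i3 i4 where d: "is_cycle V E d" "i1<i2" "i2<i3" "i3<i4" "i4 < length d"
     "d!i1 = x" "d!i2 = p" "d!i3 = y" "d!i4 = q"
    using get_cycle[OF ko] by blast
  define m where "m = length d"
  define e where "e = (\<lambda>j. {cyc d j, cyc d (Suc j)})"
  have c1: "cyc d i1 = x" "cyc d i2 = p" "cyc d i3 = y" "cyc d i4 = q" "cyc d (i1 + m) = x"
    using d cyc_nth[of _ d] cyc_period[of d i1] unfolding m_def by auto
  have sym: "\<And>u w. E u w \<Longrightarrow> E w u" using sg by (simp add: simple_graph_def)
  have inF: "e j \<in> F" if "(cyc d j \<in> S) \<noteq> (cyc d (Suc j) \<in> S)" for j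
  proof (cases "cyc d j \<in> S")
    case True
    then show ?thesis using that bd[of "cyc d j" "cyc d (Suc j)"] cyc_E[OF d(1), of j] unfolding e_def by auto
  next
    case False
    then have "{cyc d (Suc j), cyc d j} \<in> F" using that bd[of "cyc d (Suc j)" "cyc d j"] cyc_E[OF d(1), of j] sym by auto
    then show ?thesis unfolding e_def by (simp add: insert_commute)
  qed
  obtain j1 where j1: "i1 \<le> j1" "j1 < i2" "(cyc d j1 \<in> S) \<noteq> (cyc d (Suc j1) \<in> S)"
    using crossing[of i1 i2 "\<lambda>j. cyc d j \<in> S"] d c1 xy pq by auto
  obtain j2 where j2: "i2 \<le> j2" "j2 < i3" "(cyc d j2 \<in> S) \<noteq> (cyc d (Suc j2) \<in> S)"
    using crossing[of i2 i3 "\<lambda>j. cyc d j \<in> S"] d c1 xy pq by auto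
  obtain j3 where j3: "i3 \<le> j3" "j3 < i4" "(cyc d j3 \<in> S) \<noteq> (cyc d (Suc j3) \<in> S)"
    using crossing[of i3 i4 "\<lambda>j. cyc d j \<in> S"] d c1 xy pq by auto
  obtain j4 where j4: "i4 \<le> j4" "j4 < i1 + m" "(cyc d j4 \<in> S) \<noteq> (cyc d (Suc j4) \<in> S)"
    using crossing[of i4 "i1 + m" "\<lambda>j. cyc d j \<in> S"] d c1 xy pq unfolding m_def by auto
  have ne: "e a \<noteq> e b" if "i1 \<le> a" "a < b" "b < i1 + m" for a b
    using edge_inj[OF d(1) that[unfolded m_def]] unfolding e_def .
  have "{e j1, e j2, e j3, e j4} \<subseteq> F" using inF j1 j2 j3 j4 by auto
  moreover have "card {e j1, e j2, e j3, e j4} = 4"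
    using ne[of j1 j2] ne[of j1 j3] ne[of j1 j4] ne[of j2 j3] ne[of j2 j4] ne[of j3 j4] j1 j2 j3 j4 d
    by auto
  ultimately have "4 \<le> card F" using card_mono[OF F(1)] by metis
  then show False using F(2) by simp
qed

lemma sq_local:
  assumes sg: "simple_graph V E" and ko: "k_ordered V E 4"
    and dist: "distinct [v,w,v',w']" and V: "set [v,w,v',w'] \<subseteq> V"
    and Nv: "{u \<in> V. E v u} = {a,b,v'}" and Nw: "{u \<in> V. E w u} = {a,b,w'}"
  shows False
proof -
  obtain d i1 i2 i3 i4 where d: "is_cycle V E d" "i1<i2" "i2<i3" "i3<i4" "i4 < length d"
     "d!i1 = v" "d!i2 = w" "d!i3 = v'" "d!i4 = w'"
    using get_cycle[OF ko dist V] by blast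
  define m where "m = length d"
  have m3: "m \<ge> 3" using d(1) unfolding m_def is_cycle_def by simp
  have c1: "cyc d i1 = v" "cyc d i2 = w" "cyc d i3 = v'" "cyc d i4 = w'" "cyc d (i1 + m) = v"
    using d cyc_nth[of _ d] cyc_period[of d i1] unfolding m_def by auto
  have sym: "\<And>u w. E u w \<Longrightarrow> E w u" using sg by (simp add: simple_graph_def)
  have inj: "cyc d x \<noteq> cyc d y" if "i1 \<le> x" "x < y" "y < i1 + m" for x y
    using cyc_inj[OF d(1) that[unfolded m_def]] .
  have e1: "E v (cyc d (Suc i1))" using cyc_E[OF d(1), of i1] c1 by simp
  have s2: "Suc (i1 + m - 1) = i1 + m" using m3 by simp
  have e2: "E v (cyc d (i1 + m - 1))" using cyc_E[OF d(1), of "i1 + m - 1"] c1 sym unfolding s2 by simp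
  have e3: "E w (cyc d (Suc i2))" using cyc_E[OF d(1), of i2] c1 by simp
  have n1: "cyc d (Suc i1) \<in> {a,b}"
  proof -
    have "cyc d (Suc i1) \<in> {a,b,v'}" using e1 cyc_V[OF d(1)] Nv by blast
    moreover have "cyc d (Suc i1) \<noteq> cyc d i3" using inj[of "Suc i1" i3] d unfolding m_def by simp
    ultimately show ?thesis using c1 by auto
  qed
  have n2: "cyc d (i1 + m - 1) \<in> {a,b}"
  proof -
    have "cyc d (i1 + m - 1) \<in> {a,b,v'}" using e2 cyc_V[OF d(1)] Nv by blast
    moreover have "cyc d i3 \<noteq> cyc d (i1 + m - 1)" using inj[of i3 "i1 + m - 1"] d m3 unfolding m_def by simp
    ultimately show ?thesis using c1 by auto
  qed
  have n3: "cyc d (Suc i2) \<in> {a,b}"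
  proof -
    have "cyc d (Suc i2) \<in> {a,b,w'}" using e3 cyc_V[OF d(1)] Nw by blast
    moreover have "cyc d (Suc i2) \<noteq> cyc d i4" using inj[of "Suc i2" i4] d unfolding m_def by simp
    ultimately show ?thesis using c1 by auto
  qed
  have "cyc d (Suc i1) \<noteq> cyc d (Suc i2)" using inj[of "Suc i1" "Suc i2"] d unfolding m_def by simp
  moreover have "cyc d (Suc i1) \<noteq> cyc d (i1 + m - 1)" using inj[of "Suc i1" "i1 + m - 1"] d m3 unfolding m_def by simp
  moreover have "cyc d (Suc i2) \<noteq> cyc d (i1 + m - 1)" using inj[of "Suc i2" "i1 + m - 1"] d m3 unfolding m_def by simp
  ultimately show False using n1 n2 n3 by auto
qed

lemma card3_le: "card {a,b,c} \<le> 3"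
  by (simp add: card_insert_if)

context
  fixes V :: "'a set" and E :: "'a \<Rightarrow> 'a \<Rightarrow> bool"
  assumes sg: "simple_graph V E" and reg: "regular V E 3" and big: "card V > 6"
    and ko: "k_ordered V E 4"
begin

lemma finV: "finite V" using sg by (simp add: simple_graph_def)
lemma symE: "E x y \<Longrightarrow> E y x" using sg by (simp add: simple_graph_def)
lemma inV: "E x y \<Longrightarrow> x \<in> V \<and> y \<in> V" using sg by (simp add: simple_graph_def)
lemma irr: "\<not> E x x" using sg by (simp add: simple_graph_def)

lemma nbr_split:
  assumes "E x a"
  shows "\<exists>p q. {u \<in> V. E x u} = {a,p,q} \<and> a \<noteq> p \<and> a \<noteq> q \<and> p \<noteq> q"
proof -
  let ?N = "{u \<in> V. E x u}"
  have x: "x \<in> V" "a \<in> V" using inV[OF assms] by auto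
  have c: "card ?N = 3" using reg x unfolding regular_def degree_def by auto
  have f: "finite ?N" using finV by auto
  have aN: "a \<in> ?N" using assms x by auto
  have "card (?N - {a}) = 2" using c aN f by simp
  then obtain p q where pq: "?N - {a} = {p,q}" "p \<noteq> q" by (auto simp: card_2_iff)
  have "?N = insert a (?N - {a})" using aN by blast
  then have "?N = {a,p,q}" using pq by simp
  moreover have "a \<noteq> p" "a \<noteq> q" using pq(1) by blast+
  ultimately show ?thesis using pq(2) by blast
qed

lemma nbr_split2:
  assumes "E x a" "E x b" "a \<noteq> b"
  shows "\<exists>c. {u \<in> V. E x u} = {a,b,c} \<and> c \<noteq> a \<and> c \<noteq> b"
proof -
  obtain p q where pq: "{u \<in> V. E x u} = {a,p,q}" "a \<noteq> p" "a \<noteq> q" "p \<noteq> q"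
    using nbr_split[OF assms(1)] by blast
  have "b \<in> {a,p,q}" using assms inV[OF assms(2)] pq(1) by blast
  then have "b = p \<or> b = q" using assms(3) by blast
  then show ?thesis
  proof
    assume "b = p" then show ?thesis using pq by (intro exI[of _ q]) auto
  next
    assume "b = q" then show ?thesis using pq by (intro exI[of _ p]) auto
  qed
qed

lemma two_out:
  assumes "S \<subseteq> V" "card S \<le> 5"
  shows "\<exists>p q. p \<in> V \<and> q \<in> V \<and> p \<notin> S \<and> q \<notin> S \<and> p \<noteq> q"
proof -
  have fS: "finite S" using assms(1) finV finite_subset by blast
  have "card (V - S) = card V - card S" using card_Diff_subset[OF fS assms(1)] .
  then have c: "card (V - S) \<ge> 2" using assms big by linarith
  then obtain p where p: "p \<in> V - S" by (metis card.empty ex_in_conv not_numeral_le_zero)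
  have "card (V - S - {p}) \<ge> 1" using c p finV by simp
  then obtain q where q: "q \<in> V - S - {p}" by (metis card.empty ex_in_conv not_one_le_zero)
  show ?thesis using p q by blast
qed



lemma no_tri:
  assumes "E x y" "E y z" "E x z"
  shows False
proof -
  have d: "x \<noteq> y" "y \<noteq> z" "x \<noteq> z" using assms irr by auto
  obtain c where c: "{u \<in> V. E x u} = {y,z,c}" using nbr_split2[OF assms(1) assms(3) d(2)] by blast
  obtain a' where a': "{u \<in> V. E y u} = {x,z,a'}" using nbr_split2[OF symE[OF assms(1)] assms(2) d(3)] by blast
  obtain b' where b': "{u \<in> V. E z u} = {x,y,b'}" using nbr_split2[OF symE[OF assms(3)] symE[OF assms(2)] d(1)] by blast
  obtain p q where pq: "p \<in> V" "q \<in> V" "p \<notin> {x,y,z}" "q \<notin> {x,y,z}" "p \<noteq> q"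
  proof -
    have "{x,y,z} \<subseteq> V" using inV[OF assms(1)] inV[OF assms(2)] by simp
    moreover have "card {x,y,z} \<le> 5" using card3_le[of x y z] by linarith
    ultimately obtain p q where "p \<in> V \<and> q \<in> V \<and> p \<notin> {x,y,z} \<and> q \<notin> {x,y,z} \<and> p \<noteq> q"
      using two_out[of "{x,y,z}"] by blast
    then show ?thesis using that by blast
  qed
  have bd: "{u,w} \<in> {{x,c},{y,a'},{z,b'}}" if hu: "u \<in> {x,y,z}" and hw: "w \<notin> {x,y,z}" and he: "E u w" for u w
  proof -
    have wV: "w \<in> V" using inV[OF he] by simp
    consider "u = x" | "u = y" | "u = z" using hu by blast
    then show ?thesis
    proof cases
      case 1
      then have "w \<in> {y,z,c}" using c wV he by blast
      then have "w = c" using hw by blast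
      then show ?thesis using 1 by simp
    next
      case 2
      then have "w \<in> {x,z,a'}" using a' wV he by blast
      then have "w = a'" using hw by blast
      then show ?thesis using 2 by simp
    next
      case 3
      then have "w \<in> {x,y,b'}" using b' wV he by blast
      then have "w = b'" using hw by blast
      then show ?thesis using 3 by simp
    qed
  qed
  show False
    using cut_lemma[OF sg ko, of "{{x,c},{y,a'},{z,b'}}" "{x,y,z}" x y p q] bd card3_le[of "{x,c}" "{y,a'}" "{z,b'}"] d pq inV[OF assms(1)] inV[OF assms(2)]
    by simp
qed

lemma no_sq:
  assumes va: "E v a" and aw: "E a w" and wb: "E w b" and bv: "E b v" and vw: "v \<noteq> w" and ab: "a \<noteq> b"
  shows False
proof -
  have nvw: "\<not> E v w" using no_tri[OF va aw] by blast
  have nab: "\<not> E a b" using no_tri[OF _ _ va] bv symE by blast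
  have vb: "E v b" using symE[OF bv] .
  have wa: "E w a" using symE[OF aw] .
  obtain v' where v': "{u \<in> V. E v u} = {a,b,v'}" "v' \<noteq> a" "v' \<noteq> b" using nbr_split2[OF va vb ab] by blast
  obtain w' where w': "{u \<in> V. E w u} = {a,b,w'}" "w' \<noteq> a" "w' \<noteq> b" using nbr_split2[OF wa wb ab] by blast
  have ev': "E v v'" and ew': "E w w'" using v'(1) w'(1) by blast+
  have v'w: "v' \<noteq> w" using ev' nvw by blast
  have w'v: "w' \<noteq> v" using ew' nvw symE by blast
  have VV: "v \<in> V" "w \<in> V" "a \<in> V" "b \<in> V" "v' \<in> V" "w' \<in> V"
    using inV[OF va] inV[OF wb] inV[OF ev'] inV[OF ew'] by auto
  show False
  proof (cases "v' = w'")
    case False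
    show False
    proof (rule sq_local[OF sg ko _ _ v'(1) w'(1)])
      show "distinct [v, w, v', w']" using False vw v'w w'v irr ev' ew' by auto
      show "set [v, w, v', w'] \<subseteq> V" using VV by simp
    qed
  next
    case True
    have vv'w: "E v' w" using True ew' symE by blast
    have v'v: "E v' v" using symE[OF ev'] .
    obtain a' where a': "{u \<in> V. E a u} = {v,w,a'}" using nbr_split2[OF symE[OF va] aw vw] by blast
    obtain b' where b': "{u \<in> V. E b u} = {v,w,b'}" using nbr_split2[OF bv symE[OF wb] vw] by blast
    obtain z where z: "{u \<in> V. E v' u} = {v,w,z}" using nbr_split2[OF v'v vv'w vw] by blast
    let ?S = "{v,a,w,b,v'}"
    have cS: "card ?S \<le> 5" by (simp add: card_insert_if)
    obtain p q where pq: "p \<in> V" "q \<in> V" "p \<notin> ?S" "q \<notin> ?S" "p \<noteq> q"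
    proof -
      have "?S \<subseteq> V" using VV by simp
      then obtain p q where "p \<in> V \<and> q \<in> V \<and> p \<notin> ?S \<and> q \<notin> ?S \<and> p \<noteq> q"
        using two_out[of ?S] cS by blast
      then show ?thesis using that by blast
    qed
    have bd: "{u,x} \<in> {{a,a'},{b,b'},{v',z}}" if hu: "u \<in> ?S" and hx: "x \<notin> ?S" and he: "E u x" for u x
    proof -
      have xV: "x \<in> V" using inV[OF he] by simp
      consider "u = v" | "u = a" | "u = w" | "u = b" | "u = v'" using hu by blast
      then show ?thesis
      proof cases
        case 1
        then have "x \<in> {a,b,v'}" using v'(1) xV he by blast
        then show ?thesis using hx by blast
      next
        case 2
        then have "x \<in> {v,w,a'}" using a' xV he by blast
        then have "x = a'" using hx by blast
        then show ?thesis using 2 by simp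
      next
        case 3
        then have "x \<in> {a,b,w'}" using w'(1) xV he by blast
        then show ?thesis using hx True by blast
      next
        case 4
        then have "x \<in> {v,w,b'}" using b' xV he by blast
        then have "x = b'" using hx by blast
        then show ?thesis using 4 by simp
      next
        case 5
        then have "x \<in> {v,w,z}" using z xV he by blast
        then have "x = z" using hx by blast
        then show ?thesis using 5 by simp
      qed
    qed
    show False
      using cut_lemma[OF sg ko, of "{{a,a'},{b,b'},{v',z}}" ?S v w p q] bd card3_le[of "{a,a'}" "{b,b'}" "{v',z}"] vw pq VV
      by simp
  qed
qed


end


lemma W0: "(\<exists>p. walk_between V E v u p \<and> length p = Suc 0) \<longleftrightarrow> v = u \<and> v \<in> V"
proof
  assume "\<exists>p. walk_between V E v u p \<and> length p = Suc 0"
  then obtain p where p: "walk_between V E v u p" "length p = Suc 0" by blast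
  then obtain s where "p = [s]" by (auto simp: length_Suc_conv)
  then show "v = u \<and> v \<in> V" using p by (auto simp: walk_between_def)
next
  assume "v = u \<and> v \<in> V"
  then show "\<exists>p. walk_between V E v u p \<and> length p = Suc 0"
    by (intro exI[of _ "[v]"]) (auto simp: walk_between_def is_walk_def)
qed

lemma W1: assumes sg: "simple_graph V E"
  shows "(\<exists>p. walk_between V E v u p \<and> length p = Suc 1) \<longleftrightarrow> E v u"
proof
  assume "\<exists>p. walk_between V E v u p \<and> length p = Suc 1"
  then obtain p where p: "walk_between V E v u p" "length p = Suc 1" by blast
  then obtain s t where st: "p = [s,t]" by (auto simp: length_Suc_conv)
  have wb: "walk_between V E v u [s,t]" using p(1) st by simp
  have w: "is_walk E [s,t]" "s = v" "t = u" using wb unfolding walk_between_def by auto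
  have "E ([s,t]!0) ([s,t]!Suc 0)" using w(1) unfolding is_walk_def by auto
  then show "E v u" using w by simp
next
  assume e: "E v u"
  have "v \<in> V" "u \<in> V" using e sg by (auto simp: simple_graph_def)
  moreover have "\<And>i. Suc i < 2 \<Longrightarrow> E ([v,u]!i) ([v,u]!Suc i)" using e by (simp add: less_Suc_eq)
  ultimately show "\<exists>p. walk_between V E v u p \<and> length p = Suc 1"
    by (intro exI[of _ "[v,u]"]) (auto simp: walk_between_def is_walk_def)
qed

lemma W2: assumes sg: "simple_graph V E"
  shows "(\<exists>p. walk_between V E v u p \<and> length p = Suc 2) \<longleftrightarrow> (\<exists>z. E v z \<and> E z u)"
proof
  assume "\<exists>p. walk_between V E v u p \<and> length p = Suc 2"
  then obtain p where p: "walk_between V E v u p" "length p = Suc 2" by blast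
  then obtain s z t where st: "p = [s,z,t]" by (auto simp: length_Suc_conv numeral_2_eq_2)
  have wb: "walk_between V E v u [s,z,t]" using p(1) st by simp
  have w: "is_walk E [s,z,t]" "s = v" "t = u" using wb unfolding walk_between_def by auto
  have "E ([s,z,t]!0) ([s,z,t]!Suc 0)" "E ([s,z,t]!1) ([s,z,t]!Suc 1)" using w(1) unfolding is_walk_def by auto
  then show "\<exists>z. E v z \<and> E z u" using w by auto
next
  assume "\<exists>z. E v z \<and> E z u"
  then obtain z where e: "E v z" "E z u" by blast
  have "v \<in> V" "u \<in> V" "z \<in> V" using e sg by (auto simp: simple_graph_def)
  moreover have "\<And>i. Suc i < 3 \<Longrightarrow> E ([v,z,u]!i) ([v,z,u]!Suc i)" using e by (auto simp: less_Suc_eq numeral_3_eq_3)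
  ultimately show "\<exists>p. walk_between V E v u p \<and> length p = Suc 2"
    by (intro exI[of _ "[v,z,u]"]) (auto simp: walk_between_def is_walk_def)
qed

lemma dist2:
  assumes sg: "simple_graph V E" and con: "connected V E" and v: "v \<in> V" and u: "u \<in> V"
  shows "dist V E v u = 2 \<longleftrightarrow> u \<noteq> v \<and> \<not> E v u \<and> (\<exists>z. E v z \<and> E z u)"
proof -
  let ?W = "\<lambda>n. \<exists>p. walk_between V E v u p \<and> length p = Suc n"
  have ex: "\<exists>n. ?W n"
  proof -
    obtain p where p: "walk_between V E v u p" using con v u unfolding connected_def by blast
    then have "p \<noteq> []" by (simp add: walk_between_def is_walk_def)
    then obtain n where "length p = Suc n" by (cases p) auto
    then show ?thesis using p by blast
  qed
  show ?thesis
  proof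
    assume d: "dist V E v u = 2"
    have "?W 2" using LeastI_ex[OF ex] d unfolding dist_def by simp
    moreover have "\<not> ?W 0" "\<not> ?W 1" using not_less_Least[of _ ?W] d unfolding dist_def by auto
    ultimately show "u \<noteq> v \<and> \<not> E v u \<and> (\<exists>z. E v z \<and> E z u)"
      using W0[of V E v u] W1[OF sg, of v u] W2[OF sg, of v u] v by auto
  next
    assume h: "u \<noteq> v \<and> \<not> E v u \<and> (\<exists>z. E v z \<and> E z u)"
    have w2: "?W 2" using h W2[OF sg, of v u] by simp
    have n0: "\<not> ?W 0" using h W0[of V E v u] by auto
    have n1: "\<not> ?W 1" using h W1[OF sg, of v u] by simp
    show "dist V E v u = 2" unfolding dist_def
    proof (rule Least_equality)
      show "?W 2" using w2 .
      fix n assume "?W n"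
      then show "2 \<le> n" using n0 n1 by (cases n; cases "n - 1") auto
    qed
  qed
qed

theorem corollary2p2:
  fixes V :: "'a set" and E :: "'a \<Rightarrow> 'a \<Rightarrow> bool"
  assumes "simple_graph V E"
    and "connected V E"
    and "regular V E 3"
    and "card V > 6"
    and "k_ordered V E 4"
  shows "\<forall>v\<in>V. card {u \<in> V. dist V E v u = 2} = 6"
proof
  fix v assume v: "v \<in> V"
  note sg = assms(1) and con = assms(2) and reg = assms(3) and big = assms(4) and ko = assms(5)
  have sym: "\<And>x y. E x y \<Longrightarrow> E y x" using sg by (simp add: simple_graph_def)
  have inV: "\<And>x y. E x y \<Longrightarrow> x \<in> V \<and> y \<in> V" using sg by (simp add: simple_graph_def)
  have irr: "\<And>x. \<not> E x x" using sg by (simp add: simple_graph_def)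
  have nt: "\<And>x y z. E x y \<Longrightarrow> E y z \<Longrightarrow> E x z \<Longrightarrow> False"
    using no_tri[OF sg reg big ko] by blast
  have ns: "t = v" if "E v x" "E v y" "x \<noteq> y" "E x t" "E y t" for x y t
  proof (rule ccontr)
    assume "t \<noteq> v"
    then show False using no_sq[OF sg reg big ko that(1) that(4) sym[OF that(5)] sym[OF that(2)]] that(3) by blast
  qed
  have "card {u \<in> V. E v u} = 3" using reg v unfolding regular_def degree_def by auto
  then obtain a b c where N: "{u \<in> V. E v u} = {a,b,c}" "a \<noteq> b" "b \<noteq> c" "a \<noteq> c"
    by (auto simp: card_3_iff)
  have ea: "E v a" and eb: "E v b" and ec: "E v c" using N(1) by blast+
  obtain a1 a2 where A: "{u \<in> V. E a u} = {v,a1,a2}" "v \<noteq> a1" "v \<noteq> a2" "a1 \<noteq> a2"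
    using nbr_split[OF sg reg big ko sym[OF ea]] by blast
  obtain b1 b2 where B: "{u \<in> V. E b u} = {v,b1,b2}" "v \<noteq> b1" "v \<noteq> b2" "b1 \<noteq> b2"
    using nbr_split[OF sg reg big ko sym[OF eb]] by blast
  obtain c1 c2 where C: "{u \<in> V. E c u} = {v,c1,c2}" "v \<noteq> c1" "v \<noteq> c2" "c1 \<noteq> c2"
    using nbr_split[OF sg reg big ko sym[OF ec]] by blast
  have ea1: "E a a1" "E a a2" and eb1: "E b b1" "E b b2" and ec1: "E c c1" "E c c2"
    using A(1) B(1) C(1) by blast+
  have "{u \<in> V. dist V E v u = 2} = {u \<in> V. u \<noteq> v \<and> \<not> E v u \<and> (\<exists>z. E v z \<and> E z u)}"
    using dist2[OF sg con v] by blast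
  also have "\<dots> = {a1,a2,b1,b2,c1,c2}"
  proof
    show "{u \<in> V. u \<noteq> v \<and> \<not> E v u \<and> (\<exists>z. E v z \<and> E z u)} \<subseteq> {a1,a2,b1,b2,c1,c2}"
    proof
      fix u assume u: "u \<in> {u \<in> V. u \<noteq> v \<and> \<not> E v u \<and> (\<exists>z. E v z \<and> E z u)}"
      then obtain z where z: "E v z" "E z u" "u \<noteq> v" "u \<in> V" by blast
      have "z \<in> {a,b,c}" using z(1) inV[OF z(1)] N(1) by blast
      then show "u \<in> {a1,a2,b1,b2,c1,c2}" using z A(1) B(1) C(1) by blast
    qed
    show "{a1,a2,b1,b2,c1,c2} \<subseteq> {u \<in> V. u \<noteq> v \<and> \<not> E v u \<and> (\<exists>z. E v z \<and> E z u)}"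
    proof -
      have memb: "x \<in> {u \<in> V. u \<noteq> v \<and> \<not> E v u \<and> (\<exists>z. E v z \<and> E z u)}"
        if h: "E v z" "E z x" "v \<noteq> x" for x z
      proof -
        have "x \<in> V" using inV[OF h(2)] by blast
        moreover have "\<not> E v x" using nt[OF h(1) h(2)] by blast
        ultimately show ?thesis using h by blast
      qed
      show ?thesis
        using memb[OF ea ea1(1) A(2)] memb[OF ea ea1(2) A(3)] memb[OF eb eb1(1) B(2)]
          memb[OF eb eb1(2) B(3)] memb[OF ec ec1(1) C(2)] memb[OF ec ec1(2) C(3)] by blast
    qed
  qed
  also have "card \<dots> = 6"
  proof -
    have "a1 \<noteq> b1" "a1 \<noteq> b2" "a2 \<noteq> b1" "a2 \<noteq> b2"
      using ns[OF ea eb N(2)] ea1 eb1 A(2-3) by metis+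
    moreover have "a1 \<noteq> c1" "a1 \<noteq> c2" "a2 \<noteq> c1" "a2 \<noteq> c2"
      using ns[OF ea ec N(4)] ea1 ec1 A(2-3) by metis+
    moreover have "b1 \<noteq> c1" "b1 \<noteq> c2" "b2 \<noteq> c1" "b2 \<noteq> c2"
      using ns[OF eb ec N(3)] eb1 ec1 B(2-3) by metis+
    ultimately show ?thesis using A(4) B(4) C(4) by simp
  qed
  finally show "card {u \<in> V. dist V E v u = 2} = 6" .
qed

end
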